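(* Let $V$ be a finite-dimensional super vector space over a field of characteristic $0$, and let $L\subseteq\mathcal{E}=\mathfrak{gl}(V)\oplus V$ be a graded subspace. Then $L=L^\perp$ if and only if there exist a graded subspace $W\subseteq V$ and an even linear map $\pi:V\to\mathfrak{gl}(V)$ which is super skew-symmetric, i.e. $\pi(x)(y)=-(-1)^{|x||y|}\pi(y)(x)$ for all homogeneous $x,y\in V$, such that $$L=\{X+\pi(x)+x:\ X\in W^0,\ x\in W\},\qquad W^0=\{X\in\mathfrak{gl}(V): X(w)=0\ \forall w\in W\}.$$ In this situation $L\cap\mathfrak{gl}(V)=W^0$ and $W=D^0:=\{x\in V: X(x)=0\ \forall X\in D\}$ where $D=L\cap\mathfrak{gl}(V)$.
   Context: $\mathfrak{gl}(V)$: linear endomorphisms of $V$ with natural $\mathbb{Z}_2$-grading and supercommutator $[A,B]=AB-(-1)^{|A||B|}BA$. $\mathcal{E}=\mathfrak{gl}(V)\oplus V$ graded by $\mathcal{E}_\alpha=\mathfrak{gl}(V)_\alpha\oplus V_\alpha$, homogeneous elements $A+x$ with $|A|=|x|$. $V$-valued pairing: $\langle A+x,B+y\rangle=\tfrac12(Ay+(-1)^{|x||y|}Bx)$, extended bilinearly. For a subspace $F\subseteq\mathcal{E}$, $F^\perp=\{e\in\mathcal{E}:\langle e,f\rangle=0\ \forall f\in F\}$; $F$ is called maximal isotropic if $F=F^\perp$. *)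

theory Defs
  imports Complex_Main
begin

text \<open>Parity is encoded as bool: False = even (0), True = odd (1).\<close>

definition super_vs :: "('k::field \<Rightarrow> 'v::ab_group_add \<Rightarrow> 'v) \<Rightarrow> 'v set \<Rightarrow> 'v set \<Rightarrow> bool" where
  "super_vs scale V0 V1 \<longleftrightarrow> vector_space scale \<and> Modules.module.subspace scale V0 \<and> Modules.module.subspace scale V1
     \<and> V0 \<inter> V1 = {0} \<and> (\<forall>v. \<exists>a\<in>V0. \<exists>b\<in>V1. v = a + b)"

definition fin_dim :: "('k::field \<Rightarrow> 'v::ab_group_add \<Rightarrow> 'v) \<Rightarrow> bool" where
  "fin_dim scale \<longleftrightarrow> (\<exists>B. finite B \<and> Modules.module.span scale B = UNIV)"

definition Vdeg :: "'v set \<Rightarrow> 'v set \<Rightarrow> bool \<Rightarrow> 'v set" where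
  "Vdeg V0 V1 \<alpha> = (if \<alpha> then V1 else V0)"

definition vcomp :: "'v set \<Rightarrow> 'v set \<Rightarrow> bool \<Rightarrow> 'v \<Rightarrow> 'v::ab_group_add" where
  "vcomp V0 V1 \<alpha> v = (THE a. a \<in> Vdeg V0 V1 \<alpha> \<and> v - a \<in> Vdeg V0 V1 (\<not> \<alpha>))"

definition ssign :: "bool \<Rightarrow> bool \<Rightarrow> 'k::field" where
  "ssign \<alpha> \<beta> = (if \<alpha> \<and> \<beta> then -1 else 1)"

definition glV :: "('k::field \<Rightarrow> 'v::ab_group_add \<Rightarrow> 'v) \<Rightarrow> ('v \<Rightarrow> 'v) set" where
  "glV scale = {f. Vector_Spaces.linear scale scale f}"

definition gl_deg :: "('k::field \<Rightarrow> 'v::ab_group_add \<Rightarrow> 'v) \<Rightarrow> 'v set \<Rightarrow> 'v set \<Rightarrow> bool \<Rightarrow> ('v \<Rightarrow> 'v) set" where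
  "gl_deg scale V0 V1 \<alpha> = {f \<in> glV scale. \<forall>\<beta>. \<forall>x\<in>Vdeg V0 V1 \<beta>. f x \<in> Vdeg V0 V1 (\<alpha> \<noteq> \<beta>)}"

definition gcomp :: "'v set \<Rightarrow> 'v set \<Rightarrow> bool \<Rightarrow> ('v \<Rightarrow> 'v) \<Rightarrow> ('v::ab_group_add \<Rightarrow> 'v)" where
  "gcomp V0 V1 \<alpha> A = (\<lambda>v. \<Sum>\<beta>\<in>UNIV. vcomp V0 V1 (\<alpha> \<noteq> \<beta>) (A (vcomp V0 V1 \<beta> v)))"

text \<open>E = gl(V) (+) V, represented as pairs (A, x) standing for A + x.\<close>
definition Espace :: "('k::field \<Rightarrow> 'v::ab_group_add \<Rightarrow> 'v) \<Rightarrow> (('v \<Rightarrow> 'v) \<times> 'v) set" where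
  "Espace scale = glV scale \<times> UNIV"

definition Edeg :: "('k::field \<Rightarrow> 'v::ab_group_add \<Rightarrow> 'v) \<Rightarrow> 'v set \<Rightarrow> 'v set \<Rightarrow> bool \<Rightarrow> (('v \<Rightarrow> 'v) \<times> 'v) set" where
  "Edeg scale V0 V1 \<alpha> = gl_deg scale V0 V1 \<alpha> \<times> Vdeg V0 V1 \<alpha>"

definition Ecomp :: "'v set \<Rightarrow> 'v set \<Rightarrow> bool \<Rightarrow> ('v \<Rightarrow> 'v) \<times> 'v \<Rightarrow> ('v \<Rightarrow> 'v) \<times> ('v::ab_group_add)" where
  "Ecomp V0 V1 \<alpha> e = (gcomp V0 V1 \<alpha> (fst e), vcomp V0 V1 \<alpha> (snd e))"

definition Escale :: "('k \<Rightarrow> 'v \<Rightarrow> 'v) \<Rightarrow> 'k \<Rightarrow> ('v \<Rightarrow> 'v) \<times> 'v \<Rightarrow> ('v \<Rightarrow> 'v) \<times> 'v" where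
  "Escale scale c e = ((\<lambda>v. scale c (fst e v)), scale c (snd e))"

definition graded_subspace_V :: "('k::field \<Rightarrow> 'v::ab_group_add \<Rightarrow> 'v) \<Rightarrow> 'v set \<Rightarrow> 'v set \<Rightarrow> 'v set \<Rightarrow> bool" where
  "graded_subspace_V scale V0 V1 W \<longleftrightarrow> Modules.module.subspace scale W \<and> (\<forall>w\<in>W. \<forall>\<alpha>. vcomp V0 V1 \<alpha> w \<in> W)"

definition graded_subspace_E :: "('k::field \<Rightarrow> 'v::ab_group_add \<Rightarrow> 'v) \<Rightarrow> 'v set \<Rightarrow> 'v set \<Rightarrow> (('v \<Rightarrow> 'v) \<times> 'v) set \<Rightarrow> bool" where
  "graded_subspace_E scale V0 V1 L \<longleftrightarrow> L \<subseteq> Espace scale \<and> ((\<lambda>v. 0), 0) \<in> L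
     \<and> (\<forall>e\<in>L. \<forall>f\<in>L. ((\<lambda>v. fst e v + fst f v), snd e + snd f) \<in> L)
     \<and> (\<forall>c. \<forall>e\<in>L. Escale scale c e \<in> L)
     \<and> (\<forall>e\<in>L. \<forall>\<alpha>. Ecomp V0 V1 \<alpha> e \<in> L)"

text \<open>The V-valued pairing: on homogeneous elements A+x, B+y it is
  1/2 (A y + (-1)^(|x||y|) B x); extended bilinearly via homogeneous components.\<close>
definition Epair :: "('k::field_char_0 \<Rightarrow> 'v::ab_group_add \<Rightarrow> 'v) \<Rightarrow> 'v set \<Rightarrow> 'v set \<Rightarrow>
    ('v \<Rightarrow> 'v) \<times> 'v \<Rightarrow> ('v \<Rightarrow> 'v) \<times> 'v \<Rightarrow> 'v" where
  "Epair scale V0 V1 e f = scale (1/2)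
     (\<Sum>\<alpha>\<in>UNIV. \<Sum>\<beta>\<in>UNIV.
        fst (Ecomp V0 V1 \<alpha> e) (snd (Ecomp V0 V1 \<beta> f))
        + scale (ssign \<alpha> \<beta>) (fst (Ecomp V0 V1 \<beta> f) (snd (Ecomp V0 V1 \<alpha> e))))"

definition Eperp :: "('k::field_char_0 \<Rightarrow> 'v::ab_group_add \<Rightarrow> 'v) \<Rightarrow> 'v set \<Rightarrow> 'v set \<Rightarrow>
    (('v \<Rightarrow> 'v) \<times> 'v) set \<Rightarrow> (('v \<Rightarrow> 'v) \<times> 'v) set" where
  "Eperp scale V0 V1 F = {e \<in> Espace scale. \<forall>f\<in>F. Epair scale V0 V1 e f = 0}"

definition ann_gl :: "('k::field \<Rightarrow> 'v::ab_group_add \<Rightarrow> 'v) \<Rightarrow> 'v set \<Rightarrow> ('v \<Rightarrow> 'v) set" where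
  "ann_gl scale W = {X \<in> glV scale. \<forall>w\<in>W. X w = 0}"

definition ann_V :: "('v \<Rightarrow> 'v) set \<Rightarrow> 'v::zero set" where
  "ann_V D = {x. \<forall>X\<in>D. X x = 0}"

definition even_skew_map :: "('k::field \<Rightarrow> 'v::ab_group_add \<Rightarrow> 'v) \<Rightarrow> 'v set \<Rightarrow> 'v set \<Rightarrow> ('v \<Rightarrow> 'v \<Rightarrow> 'v) \<Rightarrow> bool" where
  "even_skew_map scale V0 V1 \<pi> \<longleftrightarrow>
     (\<forall>x. \<pi> x \<in> glV scale)
   \<and> (\<forall>c x y. \<pi> (scale c x + y) = (\<lambda>v. scale c (\<pi> x v) + \<pi> y v))
   \<and> (\<forall>\<alpha>. \<forall>x\<in>Vdeg V0 V1 \<alpha>. \<pi> x \<in> gl_deg scale V0 V1 \<alpha>)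
   \<and> (\<forall>\<alpha> \<beta>. \<forall>x\<in>Vdeg V0 V1 \<alpha>. \<forall>y\<in>Vdeg V0 V1 \<beta>. \<pi> x y = - scale (ssign \<alpha> \<beta>) (\<pi> y x))"

end

theory Submission
  imports Defs
begin

locale sv = vector_space scale
  for scale :: "'k::field_char_0 \<Rightarrow> 'v::ab_group_add \<Rightarrow> 'v" +
  fixes V0 V1 :: "'v set"
  assumes s0: "subspace V0" and s1: "subspace V1" and i01: "V0 \<inter> V1 = {0}"
    and dec: "\<forall>v. \<exists>a\<in>V0. \<exists>b\<in>V1. v = a + b"
begin

abbreviation "lin f \<equiv> Vector_Spaces.linear scale scale f"
abbreviation "Vd \<equiv> Vdeg V0 V1"
abbreviation "vc \<equiv> vcomp V0 V1"
abbreviation "gc \<equiv> gcomp V0 V1"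

lemma VS: "vector_space scale" by unfold_locales

lemma linI: assumes "\<And>x y. f (x+y) = f x + f y" "\<And>c x. f (scale c x) = scale c (f x)" shows "lin f"
  using assms VS unfolding Vector_Spaces.linear_iff by auto

lemma linD: assumes "lin f" shows "f (x+y) = f x + f y" "f (scale c x) = scale c (f x)"
  "f 0 = 0" "f (- x) = - f x" "f (x - y) = f x - f y"
proof -
  interpret Vector_Spaces.linear scale scale f by fact
  show "f (x+y) = f x + f y" "f (scale c x) = scale c (f x)"
  "f 0 = 0" "f (- x) = - f x" "f (x - y) = f x - f y"
    by (auto simp: add scale zero neg diff)
qed

lemma Vd_sub: "subspace (Vd a)" using s0 s1 by (auto simp: Vdeg_def)
lemma Vd_0: "0 \<in> Vd a" using Vd_sub subspace_0 by blast
lemma Vd_add: "x \<in> Vd a \<Longrightarrow> y \<in> Vd a \<Longrightarrow> x + y \<in> Vd a" using Vd_sub subspace_add by blast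
lemma Vd_scale: "x \<in> Vd a \<Longrightarrow> scale c x \<in> Vd a" using Vd_sub subspace_scale by blast
lemma Vd_neg: "x \<in> Vd a \<Longrightarrow> - x \<in> Vd a" using Vd_sub subspace_neg by blast
lemma Vd_diff: "x \<in> Vd a \<Longrightarrow> y \<in> Vd a \<Longrightarrow> x - y \<in> Vd a" using Vd_sub subspace_diff by blast

lemma Vd_int: "x \<in> Vd a \<Longrightarrow> x \<in> Vd (\<not> a) \<Longrightarrow> x = 0"
  using i01 by (cases a) (auto simp: Vdeg_def)

lemma DS: "x \<in> Vd a \<Longrightarrow> y \<in> Vd (\<not> a) \<Longrightarrow> x + y = 0 \<Longrightarrow> x = 0 \<and> y = 0"
proof -
  assume h: "x \<in> Vd a" "y \<in> Vd (\<not> a)" "x + y = 0"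
  then have "x = - y" by (simp add: eq_neg_iff_add_eq_0)
  then have "x \<in> Vd (\<not> a)" using Vd_neg h by auto
  then have "x = 0" using Vd_int h by auto
  then show ?thesis using h by auto
qed

lemma vc_ex1: "\<exists>!c. c \<in> Vd a \<and> v - c \<in> Vd (\<not> a)"
proof -
  obtain p q where pq: "p \<in> V0" "q \<in> V1" "v = p + q" using dec by blast
  have ex: "\<exists>c. c \<in> Vd a \<and> v - c \<in> Vd (\<not> a)"
  proof (cases a)
    case True then show ?thesis using pq by (auto simp: Vdeg_def intro!: exI[of _ q])
  next
    case False then show ?thesis using pq by (auto simp: Vdeg_def intro!: exI[of _ p])
  qed
  show ?thesis
  proof (rule ex_ex1I[OF ex])
    fix c d assume "c \<in> Vd a \<and> v - c \<in> Vd (\<not> a)" "d \<in> Vd a \<and> v - d \<in> Vd (\<not> a)"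
    then have h: "c - d \<in> Vd a" "(v - d) - (v - c) \<in> Vd (\<not> a)" using Vd_diff by blast+
    have "(v - d) - (v - c) = c - d" by simp
    then have "c - d \<in> Vd (\<not> a)" using h(2) by metis
    then have "c - d = 0" using Vd_int h(1) by metis
    then show "c = d" by simp
  qed
qed

lemma vc_prop: "vc a v \<in> Vd a \<and> v - vc a v \<in> Vd (\<not> a)"
  unfolding vcomp_def by (rule theI'[OF vc_ex1])

lemma vc_unique: "c \<in> Vd a \<Longrightarrow> v - c \<in> Vd (\<not> a) \<Longrightarrow> vc a v = c"
  using vc_ex1 vc_prop by blast

lemma vc_in: "vc a v \<in> Vd a" using vc_prop by blast

lemma vc_same: "v \<in> Vd a \<Longrightarrow> vc a v = v"
  by (rule vc_unique) (auto simp: Vd_0)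

lemma vc_other: "v \<in> Vd (\<not> a) \<Longrightarrow> vc a v = 0"
  by (rule vc_unique) (auto simp: Vd_0)

lemma vc_hom: "v \<in> Vd b \<Longrightarrow> vc a v = (if a = b then v else 0)"
  using vc_same vc_other by (cases "a = b") auto

lemma vc_sum: "vc False v + vc True v = v"
proof -
  have "vc True v = v - vc False v"
    by (rule vc_unique) (use vc_prop[of False v] in auto)
  then show ?thesis by simp
qed

lemma vc_lin: "lin (vc a)"
proof (rule linI)
  fix x y show "vc a (x + y) = vc a x + vc a y"
  proof (rule vc_unique)
    show "vc a x + vc a y \<in> Vd a" using vc_prop[of a x] vc_prop[of a y] Vd_add by auto
    have "x + y - (vc a x + vc a y) = (x - vc a x) + (y - vc a y)" by (simp add: algebra_simps)
    moreover have "(x - vc a x) + (y - vc a y) \<in> Vd (\<not> a)"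
      by (rule Vd_add) (simp_all add: vc_prop)
    ultimately show "x + y - (vc a x + vc a y) \<in> Vd (\<not> a)" by (simp only:)
  qed
next
  fix c x show "vc a (scale c x) = scale c (vc a x)"
  proof (rule vc_unique)
    show "scale c (vc a x) \<in> Vd a" using vc_in Vd_scale by blast
    have "scale c x - scale c (vc a x) = scale c (x - vc a x)" by (simp add: scale_right_diff_distrib)
    moreover have "scale c (x - vc a x) \<in> Vd (\<not> a)" by (rule Vd_scale) (simp add: vc_prop)
    ultimately show "scale c x - scale c (vc a x) \<in> Vd (\<not> a)" by (simp only:)
  qed
qed

lemma gc_exp: "gc a A v = vc a (A (vc False v)) + vc (\<not> a) (A (vc True v))"
  by (simp add: gcomp_def UNIV_bool)

lemma lin_comp: "lin f \<Longrightarrow> lin g \<Longrightarrow> lin (\<lambda>v. f (g v))"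
  using Vector_Spaces.linear_compose[of scale scale g scale f] by (simp add: comp_def)

lemma lin_add: assumes f: "lin f" and g: "lin g" shows "lin (\<lambda>v. f v + g v)"
  by (rule linI) (simp_all add: linD(1,2)[OF f] linD(1,2)[OF g] add_ac scale_right_distrib)

lemma lin_diff: assumes f: "lin f" and g: "lin g" shows "lin (\<lambda>v. f v - g v)"
  by (rule linI) (simp_all add: linD(1,2)[OF f] linD(1,2)[OF g] scale_right_diff_distrib)

lemma lin_scale: assumes f: "lin f" shows "lin (\<lambda>v. scale c (f v))"
  by (rule linI) (simp_all add: linD(1,2)[OF f] scale_right_distrib scale_left_commute)

lemma lin_zero: "lin (\<lambda>v. 0)"
  by (rule linI) auto

lemma lin_id: "lin (\<lambda>v. v)"
  by (rule linI) auto

lemma gc_lin: assumes "lin A" shows "lin (gc a A)"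
proof -
  have e: "gc a A = (\<lambda>v. vc a (A (vc False v)) + vc (\<not> a) (A (vc True v)))"
    by (rule ext) (rule gc_exp)
  have 1: "lin (\<lambda>v. vc a (A (vc False v)))"
    by (rule lin_comp[OF vc_lin lin_comp[OF assms vc_lin]])
  have 2: "lin (\<lambda>v. vc (\<not> a) (A (vc True v)))"
    by (rule lin_comp[OF vc_lin lin_comp[OF assms vc_lin]])
  show ?thesis unfolding e by (rule lin_add[OF 1 2])
qed

lemma vc_F_T: "vc (\<not> a) v = v - vc a v"
  using vc_sum[of v] by (cases a) (auto simp: algebra_simps)

lemma vc_0[simp]: "vc a 0 = 0" using vc_same[OF Vd_0] .

lemma gc_hom: assumes "A \<in> gl_deg scale V0 V1 b" shows "gc a A = (if a = b then A else (\<lambda>v. 0))"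
proof -
  have lA: "lin A" and h: "\<And>c x. x \<in> Vd c \<Longrightarrow> A x \<in> Vd (b \<noteq> c)"
    using assms by (auto simp: gl_deg_def glV_def)
  have 1: "A (vc False v) \<in> Vd b" for v using h[OF vc_in[of False v]] by simp
  have 2: "A (vc True v) \<in> Vd (\<not> b)" for v using h[OF vc_in[of True v]] by simp
  show ?thesis
  proof (cases "a = b")
    case True
    then show ?thesis using 1 2 by (auto simp: gc_exp vc_same linD(1)[OF lA, symmetric] vc_sum)
  next
    case False
    then have "a = (\<not> b)" by auto
    then show ?thesis using 1 2 by (auto simp: gc_exp vc_other fun_eq_iff)
  qed
qed

lemma gc_deg: assumes "lin A" shows "gc a A \<in> gl_deg scale V0 V1 a"
  unfolding gl_deg_def glV_def
proof (safe)
  show "lin (gc a A)" using gc_lin assms by blast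
next
  fix b x assume x: "x \<in> Vd b"
  show "gc a A x \<in> Vd (a \<noteq> b)"
    using x vc_in by (cases a; cases b) (auto simp: gc_exp vc_hom linD[OF assms])
qed

lemma gc_sum: assumes "lin A" shows "gc False A v + gc True A v = A v"
proof -
  have "gc False A v + gc True A v = (vc False (A (vc False v)) + vc True (A (vc False v)))
      + (vc False (A (vc True v)) + vc True (A (vc True v)))"
    by (simp add: gc_exp algebra_simps)
  also have "\<dots> = A (vc False v) + A (vc True v)" by (simp add: vc_sum)
  also have "\<dots> = A v" by (simp add: linD(1)[OF assms, symmetric] vc_sum)
  finally show ?thesis .
qed

lemma sum_gc_vc: assumes "lin A" shows "(\<Sum>a\<in>UNIV. \<Sum>d\<in>UNIV. gc a A (vc d y)) = A y"
proof -
  have "(\<Sum>a\<in>UNIV. \<Sum>d\<in>UNIV. gc a A (vc d y)) = (gc False A (vc False y) + gc False A (vc True y))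
     + (gc True A (vc False y) + gc True A (vc True y))"
    by (simp add: UNIV_bool)
  also have "\<dots> = gc False A y + gc True A y"
    by (simp only: linD(1)[OF gc_lin[OF assms], symmetric] vc_sum)
  also have "\<dots> = A y" by (rule gc_sum[OF assms])
  finally show ?thesis .
qed

lemma P0: assumes "lin A"
  shows "Epair scale V0 V1 (A, x) (B, y) = scale (1/2) (A y +
     (\<Sum>a\<in>UNIV. \<Sum>d\<in>UNIV. scale (ssign a d) (gc d B (vc a x))))"
proof -
  have "Epair scale V0 V1 (A, x) (B, y) = scale (1/2) (\<Sum>a\<in>UNIV. \<Sum>d\<in>UNIV. gc a A (vc d y) + scale (ssign a d) (gc d B (vc a x)))"
    unfolding Epair_def Ecomp_def fst_conv snd_conv by (rule refl)
  also have "\<dots> = scale (1/2) ((\<Sum>a\<in>UNIV. \<Sum>d\<in>UNIV. gc a A (vc d y)) + (\<Sum>a\<in>UNIV. \<Sum>d\<in>UNIV. scale (ssign a d) (gc d B (vc a x))))"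
    by (simp only: sum.distrib)
  finally show ?thesis by (simp only: sum_gc_vc[OF assms])
qed

lemma P4: assumes "lin A" "B \<in> gl_deg scale V0 V1 b" "y \<in> Vd b"
  shows "Epair scale V0 V1 (A, x) (B, y) = scale (1/2) (A y +
     (\<Sum>a\<in>UNIV. scale (ssign a b) (B (vc a x))))"
proof -
  have "(\<Sum>d\<in>UNIV. scale (ssign a d) (gc d B z)) = scale (ssign a b) (B z)" for a z
    unfolding gc_hom[OF assms(2)] by (cases b) (simp_all add: UNIV_bool)
  then show ?thesis unfolding P0[OF assms(1)] by simp
qed

lemma P1: assumes "lin A" "lin B"
  shows "Epair scale V0 V1 (A, 0) (B, y) = scale (1/2) (A y)"
  unfolding P0[OF assms(1)] using linD(3)[OF gc_lin[OF assms(2)]]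
  by simp

lemma P5: assumes "lin A" "lin B"
  shows "Epair scale V0 V1 (A, x) (B, y) = Epair scale V0 V1 (A, x) (Ecomp V0 V1 False (B, y))
     + Epair scale V0 V1 (A, x) (Ecomp V0 V1 True (B, y))"
proof -
  define f where "f = (\<lambda>a d. scale (ssign a d) (gc d B (vc a x)))"
  have e: "A y = A (vc False y) + A (vc True y)"
    by (simp only: linD(1)[OF assms(1), symmetric] vc_sum)
  have S: "(\<Sum>a\<in>UNIV. \<Sum>d\<in>UNIV. f a d) = (\<Sum>a\<in>UNIV. f a False) + (\<Sum>a\<in>UNIV. f a True)"
    by (simp add: UNIV_bool add_ac)
  have "Epair scale V0 V1 (A, x) (B, y) = scale (1/2) (A y + ((\<Sum>a\<in>UNIV. f a False) + (\<Sum>a\<in>UNIV. f a True)))"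
    unfolding P0[OF assms(1)] S[unfolded f_def] f_def ..
  also have "\<dots> = scale (1/2) (A (vc False y) + (\<Sum>a\<in>UNIV. f a False)) + scale (1/2) (A (vc True y) + (\<Sum>a\<in>UNIV. f a True))"
    unfolding e scale_right_distrib[symmetric] by (simp only: add_ac)
  also have "\<dots> = Epair scale V0 V1 (A, x) (Ecomp V0 V1 False (B, y))
     + Epair scale V0 V1 (A, x) (Ecomp V0 V1 True (B, y))"
    unfolding Ecomp_def fst_conv snd_conv
    unfolding P4[OF assms(1) gc_deg[OF assms(2)] vc_in] f_def gc_hom[OF gc_deg[OF assms(2)]] by simp
  finally show ?thesis .
qed

lemma proj_exists: assumes "subspace S"
  shows "\<exists>p. lin p \<and> (\<forall>v. p v \<in> S) \<and> (\<forall>s\<in>S. p s = s)"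
proof -
  interpret P: vector_space_pair scale scale by unfold_locales
  have "lin id" using lin_id by (simp add: id_def)
  from P.linear_exists_left_inverse_on[OF this assms inj_on_id]
  obtain g where "g ` UNIV \<subseteq> S" "lin g" "\<forall>v\<in>S. g (id v) = v" by blast
  then show ?thesis by (intro exI[of _ g]) auto
qed

lemma ann_ann: assumes "subspace W" shows "ann_V (ann_gl scale W) = W"
proof
  show "W \<subseteq> ann_V (ann_gl scale W)" by (auto simp: ann_V_def ann_gl_def)
next
  show "ann_V (ann_gl scale W) \<subseteq> W"
  proof
    fix x assume x: "x \<in> ann_V (ann_gl scale W)"
    obtain p where p: "lin p" "\<forall>v. p v \<in> W" "\<forall>s\<in>W. p s = s" using proj_exists[OF assms] by blast
    have "(\<lambda>v. v - p v) \<in> ann_gl scale W"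
      using p lin_diff[OF lin_id p(1)] by (auto simp: ann_gl_def glV_def)
    then have "x - p x = 0" using x by (auto simp: ann_V_def)
    then show "x \<in> W" using p(2) by (metis eq_iff_diff_eq_0)
  qed
qed

lemma even_proj: assumes "graded_subspace_V scale V0 V1 W"
  shows "\<exists>p. lin p \<and> (\<forall>v. p v \<in> W) \<and> (\<forall>s\<in>W. p s = s) \<and> (\<forall>a. \<forall>v\<in>Vd a. p v \<in> Vd a)"
proof -
  have W: "subspace W" "\<And>w a. w \<in> W \<Longrightarrow> vc a w \<in> W" using assms by (auto simp: graded_subspace_V_def)
  have "\<exists>q. lin q \<and> (\<forall>v. q v \<in> W \<inter> Vd a) \<and> (\<forall>s\<in>W \<inter> Vd a. q s = s)" for a
    by (rule proj_exists) (rule subspace_inter[OF W(1) Vd_sub])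
  then obtain q where q: "\<And>a. lin (q a)" "\<And>a v. q a v \<in> W \<inter> Vd a" "\<And>a s. s \<in> W \<inter> Vd a \<Longrightarrow> q a s = s"
    by metis
  define p where "p = (\<lambda>v. q False (vc False v) + q True (vc True v))"
  have "lin p" unfolding p_def by (intro lin_add lin_comp[OF q(1) vc_lin])
  moreover have "p v \<in> W" for v unfolding p_def using q(2) subspace_add[OF W(1)] by blast
  moreover have "p s = s" if "s \<in> W" for s
  proof -
    have "q a (vc a s) = vc a s" for a using q(3) W(2)[OF that] vc_in by blast
    then show ?thesis unfolding p_def by (simp add: vc_sum)
  qed
  moreover have "p v \<in> Vd a" if "v \<in> Vd a" for a v
  proof -
    have "p v = q a v"
      using that unfolding p_def by (cases a) (simp_all add: vc_hom linD(3)[OF q(1)])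
    then show ?thesis using q(2) by auto
  qed
  ultimately show ?thesis by blast
qed

lemma ssign_sq: "ssign a b * ssign b a = (1::'k)" by (simp add: ssign_def)
lemma ssign_nz: "ssign a b \<noteq> (0::'k)" by (simp add: ssign_def)

lemma scale_m1: "scale (-1) z = - z" by (simp add: scale_minus_left)

end

context sv begin

context
  fixes W :: "'v set" and \<pi> :: "'v \<Rightarrow> 'v \<Rightarrow> 'v" and L :: "(('v \<Rightarrow> 'v) \<times> 'v) set"
  assumes Wg: "graded_subspace_V scale V0 V1 W"
    and ES: "even_skew_map scale V0 V1 \<pi>"
    and Ldef: "L = {((\<lambda>v. X v + \<pi> x v), x) | X x. X \<in> ann_gl scale W \<and> x \<in> W}"
begin

lemma Wsub: "subspace W" using Wg by (simp add: graded_subspace_V_def)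
lemma Wvc: "w \<in> W \<Longrightarrow> vc a w \<in> W" using Wg by (simp add: graded_subspace_V_def)

lemma pi_lin: "lin (\<pi> x)" using ES by (simp add: even_skew_map_def glV_def)
lemma pi_add: "\<pi> (x + y) v = \<pi> x v + \<pi> y v"
proof -
  have "\<pi> (scale 1 x + y) = (\<lambda>v. scale 1 (\<pi> x v) + \<pi> y v)"
    using ES unfolding even_skew_map_def by blast
  then show ?thesis by (simp only: scale_one)
qed
lemma pi_0: "\<pi> 0 v = 0"
proof -
  have "\<pi> 0 v = \<pi> 0 v + \<pi> 0 v" using pi_add[of 0 0 v] by (simp only: add_0_left)
  then show ?thesis by (metis add_cancel_right_right)
qed
lemma pi_split: "\<pi> x v = \<pi> (vc False x) v + \<pi> (vc True x) v"
  using pi_add[of "vc False x" "vc True x" v] by (simp only: vc_sum)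
lemma pi_deg: "x \<in> Vd a \<Longrightarrow> \<pi> x \<in> gl_deg scale V0 V1 a"
  using ES unfolding even_skew_map_def by blast
lemma pi_skew: "x \<in> Vd a \<Longrightarrow> y \<in> Vd b \<Longrightarrow> \<pi> x y = - scale (ssign a b) (\<pi> y x)"
  using ES unfolding even_skew_map_def by blast

lemma memL: "(A, x) \<in> L \<longleftrightarrow> x \<in> W \<and> (\<lambda>v. A v - \<pi> x v) \<in> ann_gl scale W"
proof
  assume "(A, x) \<in> L"
  then obtain X where "X \<in> ann_gl scale W" "x \<in> W" "A = (\<lambda>v. X v + \<pi> x v)"
    unfolding Ldef by blast
  moreover then have "(\<lambda>v. A v - \<pi> x v) = X" by auto
  ultimately show "x \<in> W \<and> (\<lambda>v. A v - \<pi> x v) \<in> ann_gl scale W" by simp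
next
  assume h: "x \<in> W \<and> (\<lambda>v. A v - \<pi> x v) \<in> ann_gl scale W"
  show "(A, x) \<in> L" unfolding Ldef
    by (rule CollectI, rule exI[of _ "\<lambda>v. A v - \<pi> x v"], rule exI[of _ x]) (use h in simp)
qed

lemma memL_ann: "X \<in> ann_gl scale W \<Longrightarrow> (X, 0) \<in> L"
  unfolding memL using subspace_0[OF Wsub] by (simp add: pi_0)

lemma memL_pi: "w \<in> W \<Longrightarrow> (\<pi> w, w) \<in> L"
  unfolding memL using lin_zero by (simp add: ann_gl_def glV_def)

lemma memL_D: "(A, x) \<in> L \<Longrightarrow> w \<in> W \<Longrightarrow> A w = \<pi> x w"
  unfolding memL ann_gl_def by auto

lemma core_iso: assumes e: "(A, x) \<in> L" and f: "(B, y) \<in> L" and B: "B \<in> gl_deg scale V0 V1 b" and y: "y \<in> Vd b"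
  and A: "lin A"
  shows "Epair scale V0 V1 (A, x) (B, y) = 0"
proof -
  have xW: "x \<in> W" and yW: "y \<in> W" using e f memL by auto
  have 1: "A y = \<pi> x y" using memL_D[OF e yW] .
  have 2: "scale (ssign a b) (B (vc a x)) = - \<pi> (vc a x) y" for a
  proof -
    have "B (vc a x) = \<pi> y (vc a x)" using memL_D[OF f Wvc[OF xW]] .
    also have "\<dots> = - scale (ssign b a) (\<pi> (vc a x) y)" by (rule pi_skew[OF y vc_in])
    finally have "scale (ssign a b) (B (vc a x)) = - scale (ssign a b * ssign b a) (\<pi> (vc a x) y)"
      by (simp add: scale_minus_right)
    then show ?thesis by (simp only: ssign_sq scale_one)
  qed
  show ?thesis unfolding P4[OF A B y] 1 2
    by (simp add: UNIV_bool pi_split[of x y] add_ac)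
qed

lemma L_iso: assumes gL: "graded_subspace_E scale V0 V1 L"
  shows "L \<subseteq> Eperp scale V0 V1 L"
proof
  fix e assume e: "e \<in> L"
  obtain A x where ex: "e = (A, x)" by (cases e)
  have LE: "L \<subseteq> Espace scale" using gL by (simp add: graded_subspace_E_def)
  have A: "lin A" using LE e ex by (auto simp: Espace_def glV_def)
  have "Epair scale V0 V1 e f = 0" if f: "f \<in> L" for f
  proof -
    obtain B y where fy: "f = (B, y)" by (cases f)
    have B: "lin B" using LE f fy by (auto simp: Espace_def glV_def)
    have c: "Ecomp V0 V1 a (B, y) \<in> L" for a using gL f fy by (simp add: graded_subspace_E_def)
    have "Epair scale V0 V1 (A, x) (Ecomp V0 V1 a (B, y)) = 0" for a
      using core_iso[OF e[unfolded ex] c[of a, unfolded Ecomp_def fst_conv snd_conv] gc_deg[OF B] vc_in A]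
      by (simp add: Ecomp_def)
    then show ?thesis unfolding ex fy P5[OF A B] by simp
  qed
  then show "e \<in> Eperp scale V0 V1 L" using e LE by (auto simp: Eperp_def)
qed

lemma deg_app: "f \<in> gl_deg scale V0 V1 a \<Longrightarrow> x \<in> Vd b \<Longrightarrow> f x \<in> Vd (a \<noteq> b)"
  unfolding gl_deg_def by blast

lemma sign_pi: "u \<in> Vd b \<Longrightarrow> scale (ssign a b) (\<pi> u (vc a x)) = - \<pi> (vc a x) u"
proof -
  assume u: "u \<in> Vd b"
  have "\<pi> u (vc a x) = - scale (ssign b a) (\<pi> (vc a x) u)" by (rule pi_skew[OF u vc_in])
  then have "scale (ssign a b) (\<pi> u (vc a x)) = - scale (ssign a b * ssign b a) (\<pi> (vc a x) u)"
    by (simp add: scale_minus_right)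
  then show ?thesis by (simp only: ssign_sq scale_one)
qed

lemma perp_sub: assumes gL: "graded_subspace_E scale V0 V1 L"
  shows "Eperp scale V0 V1 L \<subseteq> L"
proof
  fix e assume e: "e \<in> Eperp scale V0 V1 L"
  obtain A x where ex: "e = (A, x)" by (cases e)
  have A: "lin A" using e ex by (auto simp: Eperp_def Espace_def glV_def)
  have perp: "\<And>f. f \<in> L \<Longrightarrow> Epair scale V0 V1 (A, x) f = 0" using e ex by (auto simp: Eperp_def)
  have h0: "\<And>z. scale (1/2) z = 0 \<Longrightarrow> z = 0" by simp
  have xW: "x \<in> W"
  proof -
    have "X x = 0" if X: "X \<in> ann_gl scale W" for X
    proof -
      have XL: "lin X" using X by (simp add: ann_gl_def glV_def)
      have Xk: "\<And>w. w \<in> W \<Longrightarrow> X w = 0" using X by (simp add: ann_gl_def)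
      have Xb: "gc b X \<in> ann_gl scale W" for b
        using gc_lin[OF XL] Xk Wvc by (simp add: ann_gl_def glV_def gc_exp)
      have z: "gc b X (vc a x) = 0" for a b
      proof -
        have "Epair scale V0 V1 (A, x) (gc b X, 0) = 0" using perp memL_ann[OF Xb] by blast
        then have "A 0 + (\<Sum>a\<in>UNIV. scale (ssign a b) (gc b X (vc a x))) = 0"
          unfolding P4[OF A gc_deg[OF XL] Vd_0] by (rule h0)
        then have s: "scale (ssign False b) (gc b X (vc False x)) + scale (ssign True b) (gc b X (vc True x)) = 0"
          by (simp add: UNIV_bool linD(3)[OF A])
        have m1: "scale (ssign False b) (gc b X (vc False x)) \<in> Vd b"
          using Vd_scale[OF deg_app[OF gc_deg[OF XL] vc_in[of False x]]] by simp
        have m2: "scale (ssign True b) (gc b X (vc True x)) \<in> Vd (\<not> b)"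
          using Vd_scale[OF deg_app[OF gc_deg[OF XL] vc_in[of True x]]] by simp
        from DS[OF m1 m2 s] show ?thesis using ssign_nz by (cases a) auto
      qed
      have "X x = gc False X x + gc True X x" using gc_sum[OF XL] by simp
      also have "\<dots> = 0"
        using z linD(1)[OF gc_lin[OF XL], of _ "vc False x" "vc True x"] by (simp add: vc_sum)
      finally show ?thesis .
    qed
    then have "x \<in> ann_V (ann_gl scale W)" by (simp add: ann_V_def)
    then show ?thesis using ann_ann[OF Wsub] by simp
  qed
  have hom: "A u = \<pi> x u" if u: "u \<in> W" "u \<in> Vd b" for u b
  proof -
    have "Epair scale V0 V1 (A, x) (\<pi> u, u) = 0" using perp memL_pi[OF u(1)] by blast
    then have "A u + (\<Sum>a\<in>UNIV. scale (ssign a b) (\<pi> u (vc a x))) = 0"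
      unfolding P4[OF A pi_deg[OF u(2)] u(2)] by (rule h0)
    then have "A u + (- \<pi> (vc False x) u + - \<pi> (vc True x) u) = 0"
      by (simp only: sign_pi[OF u(2)] UNIV_bool sum.insert sum.empty finite.emptyI finite_insert
          insert_iff empty_iff simp_thms add_0_right)
    then have "A u - (\<pi> (vc False x) u + \<pi> (vc True x) u) = 0" by (simp add: algebra_simps)
    then show ?thesis using pi_split[of x u] by simp
  qed
  have "(\<lambda>v. A v - \<pi> x v) \<in> ann_gl scale W"
  proof -
    have "A w = \<pi> x w" if w: "w \<in> W" for w
    proof -
      have "A w = A (vc False w) + A (vc True w)" by (simp only: linD(1)[OF A, symmetric] vc_sum)
      also have "\<dots> = \<pi> x (vc False w) + \<pi> x (vc True w)"
        using hom[OF Wvc[OF w] vc_in] by simp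
      also have "\<dots> = \<pi> x w" by (simp only: linD(1)[OF pi_lin, symmetric] vc_sum)
      finally show ?thesis .
    qed
    then show ?thesis using lin_diff[OF A pi_lin] by (simp add: ann_gl_def glV_def)
  qed
  then show "e \<in> L" unfolding ex memL using xW by simp
qed

lemma back_dir: assumes gL: "graded_subspace_E scale V0 V1 L"
  shows "L = Eperp scale V0 V1 L"
  using L_iso[OF gL] perp_sub[OF gL] by blast

lemma D_eq: "{X. (X, 0) \<in> L} = ann_gl scale W"
  using memL[of _ 0] subspace_0[OF Wsub] by (auto simp: pi_0)

lemma W_eq: "W = ann_V {X. (X, 0) \<in> L}"
  unfolding D_eq ann_ann[OF Wsub] ..

end
end

context sv begin

context
  fixes L :: "(('v \<Rightarrow> 'v) \<times> 'v) set"
  assumes gL: "graded_subspace_E scale V0 V1 L"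
    and perp: "L = Eperp scale V0 V1 L"
begin

lemma Llin: "(B, w) \<in> L \<Longrightarrow> lin B"
  using gL by (auto simp: graded_subspace_E_def Espace_def glV_def)

lemma L0: "((\<lambda>v. 0), 0) \<in> L" using gL by (simp add: graded_subspace_E_def)

lemma Lcomb: "(B1, w1) \<in> L \<Longrightarrow> (B2, w2) \<in> L \<Longrightarrow> ((\<lambda>v. scale c (B1 v) + B2 v), scale c w1 + w2) \<in> L"
proof -
  assume a: "(B1, w1) \<in> L" "(B2, w2) \<in> L"
  have "Escale scale c (B1, w1) \<in> L" using gL a(1) by (simp add: graded_subspace_E_def)
  then have "((\<lambda>v. scale c (B1 v)), scale c w1) \<in> L" by (simp add: Escale_def)
  then show ?thesis using gL a(2) unfolding graded_subspace_E_def by fastforce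
qed

lemma Lsub: "(B1, w1) \<in> L \<Longrightarrow> (B2, w2) \<in> L \<Longrightarrow> ((\<lambda>v. B1 v - B2 v), w1 - w2) \<in> L"
  using Lcomb[of B2 w2 B1 w1 "-1"] by (simp add: scale_m1)

lemma Lcomp: "(B, w) \<in> L \<Longrightarrow> (gc a B, vc a w) \<in> L"
  using gL unfolding graded_subspace_E_def Ecomp_def by fastforce

lemma iso: "e \<in> L \<Longrightarrow> f \<in> L \<Longrightarrow> Epair scale V0 V1 e f = 0"
  using perp unfolding Eperp_def by blast

definition "Wset = snd ` L"

lemma kill: "(B, 0) \<in> L \<Longrightarrow> u \<in> Wset \<Longrightarrow> B u = 0"
proof -
  assume B: "(B, 0) \<in> L" and u: "u \<in> Wset"
  then obtain C where C: "(C, u) \<in> L" unfolding Wset_def by force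
  have "Epair scale V0 V1 (B, 0) (C, u) = 0" by (rule iso[OF B C])
  then show ?thesis unfolding P1[OF Llin[OF B] Llin[OF C]] by simp
qed

lemma key: "(B1, w) \<in> L \<Longrightarrow> (B2, w) \<in> L \<Longrightarrow> u \<in> Wset \<Longrightarrow> B1 u = B2 u"
proof -
  assume a: "(B1, w) \<in> L" "(B2, w) \<in> L" "u \<in> Wset"
  have "((\<lambda>v. B1 v - B2 v), 0) \<in> L" using Lsub[OF a(1,2)] by simp
  from kill[OF this a(3)] show ?thesis by simp
qed

lemma W_graded: "graded_subspace_V scale V0 V1 Wset"
  unfolding graded_subspace_V_def
proof
  show "subspace Wset" unfolding subspace_def
  proof (intro conjI ballI allI)
    show "0 \<in> Wset" using L0 unfolding Wset_def by force
  next
    fix x y assume "x \<in> Wset" "y \<in> Wset"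
    then obtain B C where "(B, x) \<in> L" "(C, y) \<in> L" unfolding Wset_def by force
    from Lcomb[OF this, of 1] show "x + y \<in> Wset" unfolding Wset_def by force
  next
    fix c x assume "x \<in> Wset"
    then obtain B where "(B, x) \<in> L" unfolding Wset_def by force
    from Lcomb[OF this L0, of c] show "scale c x \<in> Wset" unfolding Wset_def by force
  qed
next
  show "\<forall>w\<in>Wset. \<forall>a. vc a w \<in> Wset"
  proof (intro ballI allI)
    fix w a assume "w \<in> Wset"
    then obtain B where "(B, w) \<in> L" unfolding Wset_def by force
    from Lcomp[OF this, of a] show "vc a w \<in> Wset" unfolding Wset_def by force
  qed
qed

definition "Bs w = (SOME B. (B, w) \<in> L)"

lemma Bs_mem: "w \<in> Wset \<Longrightarrow> (Bs w, w) \<in> L"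
proof -
  assume "w \<in> Wset"
  then have "\<exists>B. (B, w) \<in> L" unfolding Wset_def by force
  then show ?thesis unfolding Bs_def by (rule someI_ex[where P="\<lambda>B. (B, w) \<in> L"])
qed

lemma Bs_lin: "w \<in> Wset \<Longrightarrow> lin (Bs w)" using Llin[OF Bs_mem] .

lemma forward:
  "\<exists>Wset \<pi>. graded_subspace_V scale V0 V1 Wset \<and> even_skew_map scale V0 V1 \<pi> \<and>
              L = {((\<lambda>v. X v + \<pi> x v), x) | X x. X \<in> ann_gl scale Wset \<and> x \<in> Wset}"
proof -
  obtain p where p: "lin p" "\<And>v. p v \<in> Wset" "\<And>s. s \<in> Wset \<Longrightarrow> p s = s" "\<And>a v. v \<in> Vd a \<Longrightarrow> p v \<in> Vd a"
    using even_proj[OF W_graded] by blast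
  define \<pi> where "\<pi> = (\<lambda>x v. Bs (p x) (p v))"
  have pil: "lin (\<pi> x)" for x unfolding \<pi>_def by (rule lin_comp[OF Bs_lin[OF p(2)] p(1)])
  have comp_eq: "Bs (p x) u = gc a (Bs (p x)) u" if "x \<in> Vd a" "u \<in> Wset" for x u a
  proof -
    have "(gc a (Bs (p x)), vc a (p x)) \<in> L" by (rule Lcomp[OF Bs_mem[OF p(2)]])
    then have "(gc a (Bs (p x)), p x) \<in> L" using vc_same[OF p(4)[OF that(1)]] by simp
    then show ?thesis using key[OF Bs_mem[OF p(2)] _ that(2)] by blast
  qed
  have ES: "even_skew_map scale V0 V1 \<pi>"
    unfolding even_skew_map_def
  proof (intro conjI allI ballI)
    fix x show "\<pi> x \<in> glV scale" using pil by (simp add: glV_def)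
  next
    fix c x y
    have "(\<lambda>v. scale c (Bs (p x) v) + Bs (p y) v, scale c (p x) + p y) \<in> L"
      by (rule Lcomb[OF Bs_mem[OF p(2)] Bs_mem[OF p(2)]])
    moreover have "scale c (p x) + p y = p (scale c x + y)" by (simp add: linD[OF p(1)])
    ultimately have "(\<lambda>v. scale c (Bs (p x) v) + Bs (p y) v, p (scale c x + y)) \<in> L" by simp
    from key[OF Bs_mem[OF p(2)] this p(2)]
    show "\<pi> (scale c x + y) = (\<lambda>v. scale c (\<pi> x v) + \<pi> y v)"
      unfolding \<pi>_def by (intro ext) blast
  next
    fix a x assume x: "x \<in> Vd a"
    show "\<pi> x \<in> gl_deg scale V0 V1 a"
      unfolding gl_deg_def
    proof (intro CollectI conjI allI ballI)
      show "\<pi> x \<in> glV scale" using pil by (simp add: glV_def)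
    next
      fix b v assume v: "v \<in> Vd b"
      have "\<pi> x v = gc a (Bs (p x)) (p v)" unfolding \<pi>_def by (rule comp_eq[OF x p(2)])
      also have "\<dots> \<in> Vd (a \<noteq> b)"
        using gc_deg[OF Bs_lin[OF p(2)], of a] p(4)[OF v] unfolding gl_deg_def by blast
      finally show "\<pi> x v \<in> Vd (a \<noteq> b)" .
    qed
  next
    fix a b x y assume x: "x \<in> Vd a" and y: "y \<in> Vd b"
    define G1 where "G1 = gc a (Bs (p x))"
    define G2 where "G2 = gc b (Bs (p y))"
    have m1: "(G1, p x) \<in> L"
      using Lcomp[OF Bs_mem[OF p(2)], of a x] vc_same[OF p(4)[OF x]] unfolding G1_def by simp
    have m2: "(G2, p y) \<in> L"
      using Lcomp[OF Bs_mem[OF p(2)], of b y] vc_same[OF p(4)[OF y]] unfolding G2_def by simp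
    have G1l: "lin G1" unfolding G1_def by (rule gc_lin[OF Bs_lin[OF p(2)]])
    have G2d: "G2 \<in> gl_deg scale V0 V1 b" unfolding G2_def by (rule gc_deg[OF Bs_lin[OF p(2)]])
    have G2l: "lin G2" unfolding G2_def by (rule gc_lin[OF Bs_lin[OF p(2)]])
    have "Epair scale V0 V1 (G1, p x) (G2, p y) = 0" by (rule iso[OF m1 m2])
    then have "scale (1/2) (G1 (p y) + (\<Sum>c\<in>UNIV. scale (ssign c b) (G2 (vc c (p x))))) = 0"
      unfolding P4[OF G1l G2d p(4)[OF y]] .
    then have e0: "G1 (p y) + (\<Sum>c\<in>UNIV. scale (ssign c b) (G2 (vc c (p x)))) = 0" by simp
    have "(\<Sum>c\<in>UNIV. scale (ssign c b) (G2 (vc c (p x)))) = scale (ssign a b) (G2 (p x))"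
      using vc_hom[OF p(4)[OF x]] linD(3)[OF G2l] by (cases a) (simp_all add: UNIV_bool)
    with e0 have e1: "G1 (p y) + scale (ssign a b) (G2 (p x)) = 0" by simp
    have g1: "G1 (p y) = \<pi> x y" unfolding \<pi>_def G1_def by (rule comp_eq[OF x p(2), symmetric])
    have g2: "G2 (p x) = \<pi> y x" unfolding \<pi>_def G2_def by (rule comp_eq[OF y p(2), symmetric])
    from e1 show "\<pi> x y = - scale (ssign a b) (\<pi> y x)"
      unfolding g1 g2 by (simp add: eq_neg_iff_add_eq_0)
  qed
  have Leq: "L = {((\<lambda>v. X v + \<pi> x v), x) | X x. X \<in> ann_gl scale Wset \<and> x \<in> Wset}"
  proof (intro equalityI subsetI)
    fix e assume e: "e \<in> L"
    obtain B w where ew: "e = (B, w)" by (cases e)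
    have eL: "(B, w) \<in> L" using e ew by simp
    have wW: "w \<in> Wset" using e ew unfolding Wset_def by force
    define X where "X = (\<lambda>v. B v - \<pi> w v)"
    have "X \<in> ann_gl scale Wset"
    proof -
      have "X u = 0" if "u \<in> Wset" for u
        unfolding X_def \<pi>_def p(3)[OF wW] p(3)[OF that] using key[OF eL Bs_mem[OF wW] that] by simp
      then show ?thesis using lin_diff[OF Llin[OF eL] pil] unfolding X_def by (simp add: ann_gl_def glV_def)
    qed
    moreover have "e = ((\<lambda>v. X v + \<pi> w v), w)" unfolding ew X_def by simp
    ultimately show "e \<in> {((\<lambda>v. X v + \<pi> x v), x) | X x. X \<in> ann_gl scale Wset \<and> x \<in> Wset}"
      using wW by blast
  next
    fix e assume "e \<in> {((\<lambda>v. X v + \<pi> x v), x) | X x. X \<in> ann_gl scale Wset \<and> x \<in> Wset}"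
    then obtain X x where X: "X \<in> ann_gl scale Wset" and x: "x \<in> Wset" and ex: "e = ((\<lambda>v. X v + \<pi> x v), x)"
      by blast
    have Xl: "lin X" and Xk: "\<And>u. u \<in> Wset \<Longrightarrow> X u = 0" using X by (auto simp: ann_gl_def glV_def)
    define Y where "Y = (\<lambda>v. X v + Bs x (p v) - Bs x v)"
    have Yl: "lin Y" unfolding Y_def
      by (rule lin_diff[OF lin_add[OF Xl lin_comp[OF Bs_lin[OF x] p(1)]] Bs_lin[OF x]])
    have "(Y, 0) \<in> Eperp scale V0 V1 L"
    proof -
      have "Epair scale V0 V1 (Y, 0) f = 0" if f: "f \<in> L" for f
      proof -
        obtain C u where fu: "f = (C, u)" by (cases f)
        have u: "u \<in> Wset" using f fu unfolding Wset_def by force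
        have "Y u = 0" unfolding Y_def using Xk[OF u] p(3)[OF u] by simp
        then show ?thesis unfolding fu P1[OF Yl Llin[OF f[unfolded fu]]] by simp
      qed
      then show ?thesis using Yl by (simp add: Eperp_def Espace_def glV_def)
    qed
    then have YL: "(Y, 0) \<in> L" using perp by simp
    have "((\<lambda>v. scale 1 (Y v) + Bs x v), scale 1 0 + x) \<in> L" by (rule Lcomb[OF YL Bs_mem[OF x]])
    moreover have "(\<lambda>v. scale 1 (Y v) + Bs x v) = (\<lambda>v. X v + \<pi> x v)"
      unfolding Y_def \<pi>_def p(3)[OF x] by (simp add: fun_eq_iff)
    ultimately show "e \<in> L" unfolding ex by simp
  qed
  show ?thesis using W_graded ES Leq by blast
qed

end
end

theorem mainTheorem4:
  fixes scale :: "'k::field_char_0 \<Rightarrow> 'v::ab_group_add \<Rightarrow> 'v"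
    and V0 V1 :: "'v set"
    and L :: "(('v \<Rightarrow> 'v) \<times> 'v) set"
  assumes "super_vs scale V0 V1"
    and "fin_dim scale"
    and "graded_subspace_E scale V0 V1 L"
  shows "(L = Eperp scale V0 V1 L \<longleftrightarrow>
           (\<exists>W \<pi>. graded_subspace_V scale V0 V1 W \<and> even_skew_map scale V0 V1 \<pi> \<and>
              L = {((\<lambda>v. X v + \<pi> x v), x) | X x. X \<in> ann_gl scale W \<and> x \<in> W}))
       \<and> (\<forall>W \<pi>. L = Eperp scale V0 V1 L \<and> graded_subspace_V scale V0 V1 W \<and> even_skew_map scale V0 V1 \<pi> \<and>
              L = {((\<lambda>v. X v + \<pi> x v), x) | X x. X \<in> ann_gl scale W \<and> x \<in> W}
            \<longrightarrow> {X. (X, 0) \<in> L} = ann_gl scale W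
              \<and> W = ann_V {X. (X, 0) \<in> L})"
proof -
  have "sv scale V0 V1"
    using assms(1) unfolding super_vs_def sv_def sv_axioms_def by auto
  then interpret sv scale V0 V1 .
  show ?thesis
  proof (intro conjI allI impI iffI)
    assume "L = Eperp scale V0 V1 L"
    from forward[OF assms(3) this]
    show "\<exists>W \<pi>. graded_subspace_V scale V0 V1 W \<and> even_skew_map scale V0 V1 \<pi> \<and>
              L = {((\<lambda>v. X v + \<pi> x v), x) | X x. X \<in> ann_gl scale W \<and> x \<in> W}" .
  next
    assume "\<exists>W \<pi>. graded_subspace_V scale V0 V1 W \<and> even_skew_map scale V0 V1 \<pi> \<and>
              L = {((\<lambda>v. X v + \<pi> x v), x) | X x. X \<in> ann_gl scale W \<and> x \<in> W}"
    then obtain W' \<pi>' where h: "graded_subspace_V scale V0 V1 W'" "even_skew_map scale V0 V1 \<pi>'"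
      "L = {((\<lambda>v. X v + \<pi>' x v), x) | X x. X \<in> ann_gl scale W' \<and> x \<in> W'}" by blast
    show "L = Eperp scale V0 V1 L" by (rule back_dir[OF h assms(3)])
  next
    fix W' \<pi>'
    assume h: "L = Eperp scale V0 V1 L \<and> graded_subspace_V scale V0 V1 W' \<and> even_skew_map scale V0 V1 \<pi>' \<and>
              L = {((\<lambda>v. X v + \<pi>' x v), x) | X x. X \<in> ann_gl scale W' \<and> x \<in> W'}"
    show "{X. (X, 0) \<in> L} = ann_gl scale W'" using D_eq h by blast
    show "W' = ann_V {X. (X, 0) \<in> L}" using W_eq h by blast
  qed
qed

end
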